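(* Let $\nu$ be a probability measure on $\mathrm{U}(d)$ and suppose the set of channels $\{\mathcal{V}:V\in\mathrm{supp}(\nu)\}$ is not an $\epsilon$-net in $\mathcal{U}(d)$. Then there exists $\mathcal{V}_0\in\mathcal{U}(d)$ such that for every integrable function $\Phi$ on $\mathcal{U}(d)$ and every $\kappa$ with $0\le\kappa\le\epsilon$, $$\int_{B(\mathcal{V}_0,\kappa)}\mathrm{d}\mu(\mathcal{U})\,(T_\nu\Phi)(\mathcal{U})\le\max_{\mathcal{V}:\,\mathrm{D}(\mathcal{V},\mathcal{I})\ge\epsilon}\int_{B(\mathcal{V},\kappa)}\mathrm{d}\mu(\mathcal{U})\,\Phi(\mathcal{U}).$$
   Context: $\mathcal{U}(d)$ is the set of unitary channels on $\mathbb{C}^d$, $\mathcal{I}$ the identity channel, $\mu$ the Haar probability measure. $\mathrm{D}(\mathcal{U},\mathcal{V})=\min_\varphi\|U-e^{i\varphi}V\|_\infty$, $B(\mathcal{V},\kappa)=\{\mathcal{U}:\mathrm{D}(\mathcal{U},\mathcal{V})\le\kappa\}$. An $\epsilon$-net is a subset such that every channel is within $\mathrm{D}$-distance $\epsilon$ of some element. $(T_\nu\Phi)(\mathcal{U})=\int\mathrm{d}\nu(V)\,\Phi(\mathcal{V}^{-1}\mathcal{U})$. *)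

theory Defs
  imports "HOL-Analysis.Analysis" "HOL-Probability.Probability"
begin

text \<open>d x d complex matrices, d = CARD('n).\<close>

definition cadj :: "complex^'n^'n \<Rightarrow> complex^'n^'n" where
  "cadj A = (\<chi> i j. cnj (A $ j $ i))"

definition unitary_mat :: "complex^'n^'n \<Rightarrow> bool" where
  "unitary_mat A \<longleftrightarrow> A ** cadj A = mat 1"

definition Ud :: "(complex^'n^'n) set" where
  "Ud = {A. unitary_mat A}"

definition cscale :: "complex \<Rightarrow> complex^'n^'n \<Rightarrow> complex^'n^'n" where
  "cscale c A = (\<chi> i j. c * A $ i $ j)"

definition opnorm :: "complex^'n^'n \<Rightarrow> real" where
  "opnorm A = onorm (\<lambda>x. A *v x)"

definition Dch :: "complex^'n^'n \<Rightarrow> complex^'n^'n \<Rightarrow> real" where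
  "Dch U V = (INF \<phi>::real. opnorm (U - cscale (cis \<phi>) V))"

definition Dball :: "complex^'n^'n \<Rightarrow> real \<Rightarrow> (complex^'n^'n) set" where
  "Dball V \<kappa> = {U \<in> Ud. Dch U V \<le> \<kappa>}"

definition Ud_borel :: "(complex^'n^'n) measure" where
  "Ud_borel = restrict_space borel Ud"

definition msupp :: "'a::topological_space measure \<Rightarrow> 'a set" where
  "msupp M = {x \<in> space M. \<forall>S. open S \<and> x \<in> S \<longrightarrow> emeasure M (S \<inter> space M) > 0}"

definition is_eps_net :: "(complex^'n^'n) set \<Rightarrow> real \<Rightarrow> bool" where
  "is_eps_net N \<epsilon> \<longleftrightarrow> N \<subseteq> Ud \<and> (\<forall>U\<in>Ud. \<exists>V\<in>N. Dch U V \<le> \<epsilon>)"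

text \<open>Haar probability measure on U(d) (left-invariant Borel probability measure;
  unique by the uniqueness of Haar measure).\<close>
definition haar_Ud :: "(complex^'n^'n) measure \<Rightarrow> bool" where
  "haar_Ud \<mu> \<longleftrightarrow> sets \<mu> = sets Ud_borel \<and> prob_space \<mu> \<and>
     (\<forall>V\<in>Ud. distr \<mu> Ud_borel (\<lambda>U. V ** U) = \<mu>)"

text \<open>Functions on unitary channels = phase-invariant functions on U(d).\<close>
definition channel_fun :: "(complex^'n^'n \<Rightarrow> real) \<Rightarrow> bool" where
  "channel_fun \<Phi> \<longleftrightarrow> (\<forall>U\<in>Ud. \<forall>\<phi>::real. \<Phi> (cscale (cis \<phi>) U) = \<Phi> U)"

definition Tnu :: "(complex^'n^'n) measure \<Rightarrow> (complex^'n^'n \<Rightarrow> real) \<Rightarrow> complex^'n^'n \<Rightarrow> real" where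
  "Tnu \<nu> \<Phi> U = (\<integral>V. \<Phi> (cadj V ** U) \<partial>\<nu>)"

end

theory Submission
  imports Defs
begin

lemma cadj_nth[simp]: "cadj A $ i $ j = cnj (A $ j $ i)"
  by (simp add: cadj_def)

lemma cadj_cadj[simp]: "cadj (cadj A) = A"
  by (simp add: cadj_def vec_eq_iff)

lemma cadj_mult: "cadj (A ** B) = cadj B ** cadj A"
  by (simp add: vec_eq_iff matrix_matrix_mult_def mult.commute)

lemma cadj_mat1[simp]: "cadj (mat 1) = mat 1"
  by (simp add: vec_eq_iff mat_def)

lemma unitary_left: "A \<in> Ud \<Longrightarrow> cadj A ** A = mat 1"
  by (simp add: Ud_def unitary_mat_def matrix_left_right_inverse)

lemma unitary_right: "A \<in> Ud \<Longrightarrow> A ** cadj A = mat 1"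
  by (simp add: Ud_def unitary_mat_def)

lemma Ud_mult: "A \<in> Ud \<Longrightarrow> B \<in> Ud \<Longrightarrow> A ** B \<in> Ud"
  unfolding Ud_def unitary_mat_def mem_Collect_eq
  by (simp add: cadj_mult matrix_mul_assoc) (metis matrix_mul_assoc matrix_mul_rid)

lemma Ud_cadj: "A \<in> Ud \<Longrightarrow> cadj A \<in> Ud"
  using unitary_left[of A] by (simp add: Ud_def unitary_mat_def)

lemma mat1_Ud: "mat 1 \<in> Ud"
  by (simp add: Ud_def unitary_mat_def)

lemma cancel_left: "A \<in> Ud \<Longrightarrow> cadj A ** (A ** B) = B"
  by (simp add: matrix_mul_assoc unitary_left)

lemma cancel_left2: "A \<in> Ud \<Longrightarrow> A ** (cadj A ** B) = B"
  by (simp add: matrix_mul_assoc unitary_right)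

lemma norm_sq_vec: "complex_of_real ((norm (x::complex^'n))^2) = (\<Sum>i\<in>UNIV. x$i * cnj (x$i))"
proof -
  have "(norm x)^2 = (\<Sum>i\<in>UNIV. (cmod (x$i))^2)"
    by (simp add: norm_vec_def L2_set_def sum_nonneg)
  then have "complex_of_real ((norm x)^2) = (\<Sum>i\<in>UNIV. complex_of_real ((cmod (x$i))^2))"
    by simp
  then show ?thesis by (simp only: complex_norm_square)
qed

lemma unitary_norm:
  assumes "W \<in> Ud"
  shows "norm (W *v x) = norm x"
proof -
  have I: "(\<Sum>i\<in>UNIV. cnj (W$i$k) * W$i$j) = (if k = j then 1 else 0)" for k j
  proof -
    have "(cadj W ** W) $ k $ j = (if k = j then 1 else 0)"
      using unitary_left[OF assms] by (simp add: mat_def)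
    then show ?thesis by (simp add: matrix_matrix_mult_def)
  qed
  have "complex_of_real ((norm (W *v x))^2) = (\<Sum>i\<in>UNIV. (\<Sum>j\<in>UNIV. W$i$j * x$j) * cnj (\<Sum>k\<in>UNIV. W$i$k * x$k))"
    by (subst norm_sq_vec) (simp add: matrix_vector_mult_def)
  also have "\<dots> = (\<Sum>i\<in>UNIV. \<Sum>j\<in>UNIV. \<Sum>k\<in>UNIV. (W$i$j * x$j) * (cnj (W$i$k) * cnj (x$k)))"
    by (simp add: sum_product cnj_sum)
  also have "\<dots> = (\<Sum>j\<in>UNIV. \<Sum>k\<in>UNIV. x$j * cnj (x$k) * (\<Sum>i\<in>UNIV. cnj (W$i$k) * W$i$j))"
  proof -
    have "(\<Sum>i\<in>UNIV. \<Sum>j\<in>UNIV. \<Sum>k\<in>UNIV. (W$i$j * x$j) * (cnj (W$i$k) * cnj (x$k)))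
       = (\<Sum>j\<in>UNIV. \<Sum>i\<in>UNIV. \<Sum>k\<in>UNIV. (W$i$j * x$j) * (cnj (W$i$k) * cnj (x$k)))"
      by (rule sum.swap)
    also have "\<dots> = (\<Sum>j\<in>UNIV. \<Sum>k\<in>UNIV. \<Sum>i\<in>UNIV. (W$i$j * x$j) * (cnj (W$i$k) * cnj (x$k)))"
      by (rule sum.cong[OF refl], rule sum.swap)
    also have "\<dots> = (\<Sum>j\<in>UNIV. \<Sum>k\<in>UNIV. x$j * cnj (x$k) * (\<Sum>i\<in>UNIV. cnj (W$i$k) * W$i$j))"
      by (simp add: sum_distrib_left mult_ac)
    finally show ?thesis .
  qed
  also have "\<dots> = (\<Sum>j\<in>UNIV. x$j * cnj (x$j))"
    by (simp add: I if_distrib sum.delta' cong: if_cong)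
  also have "\<dots> = complex_of_real ((norm x)^2)" by (rule norm_sq_vec[symmetric])
  finally have "(norm (W *v x))^2 = (norm x)^2" using of_real_eq_iff by blast
  then show ?thesis by (simp add: power2_eq_iff_nonneg)
qed

lemma opnorm_unitary:
  assumes "W \<in> Ud"
  shows "opnorm (W ** A) = opnorm A"
  unfolding opnorm_def onorm_def
  by (simp add: matrix_vector_mul_assoc[symmetric] unitary_norm[OF assms])

lemma mult_cscale: "W ** cscale c V = cscale c (W ** V)"
  by (simp add: vec_eq_iff matrix_matrix_mult_def cscale_def sum_distrib_left mult_ac)

lemma matrix_sub_ldistrib: "(A::complex^'n^'n) ** (B - C) = A ** B - A ** C"
  by (simp add: vec_eq_iff matrix_matrix_mult_def sum_subtractf right_diff_distrib)

lemma Dch_unitary: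
  assumes "W \<in> Ud"
  shows "Dch (W ** U) (W ** V) = Dch U V"
  unfolding Dch_def
  by (simp add: mult_cscale[symmetric] matrix_sub_ldistrib[symmetric] opnorm_unitary[OF assms])


lemma norm_le_l1_gen: "norm (x::complex^'n) \<le> (\<Sum>i\<in>UNIV. norm (x$i))"
  unfolding norm_vec_def by (rule L2_set_le_sum) simp

lemma matvec_bound: "norm ((A::complex^'n^'n) *v x) \<le> (real CARD('n) * real CARD('n) * norm A) * norm x"
proof -
  have c: "norm ((A *v x)$i) \<le> real CARD('n) * (norm A * norm x)" for i
  proof -
    have "norm ((A *v x)$i) = norm (\<Sum>j\<in>UNIV. A$i$j * x$j)"
      by (simp add: matrix_vector_mult_def)
    also have "\<dots> \<le> (\<Sum>j\<in>UNIV. norm (A$i$j * x$j))" by (rule norm_sum)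
    also have "\<dots> \<le> (\<Sum>j::'n\<in>UNIV. norm A * norm x)"
    proof (rule sum_mono)
      fix j
      have "norm (A$i$j) \<le> norm A" by (rule order_trans[OF Finite_Cartesian_Product.norm_nth_le[of "A$i" j] Finite_Cartesian_Product.norm_nth_le[of A i]])
      moreover have "norm (x$j) \<le> norm x" by (rule Finite_Cartesian_Product.norm_nth_le)
      ultimately show "norm (A$i$j * x$j) \<le> norm A * norm x"
        unfolding norm_mult by (rule mult_mono) auto
    qed
    finally show ?thesis by simp
  qed
  have "norm (A *v x) \<le> (\<Sum>i\<in>UNIV. norm ((A *v x)$i))" by (rule norm_le_l1_gen)
  also have "\<dots> \<le> (\<Sum>i::'n\<in>UNIV. real CARD('n) * (norm A * norm x))"
    by (rule sum_mono) (rule c)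
  finally show ?thesis by (simp add: mult_ac)
qed

lemma opnorm_bound: "opnorm (A::complex^'n^'n) \<le> real CARD('n) * real CARD('n) * norm A"
  unfolding opnorm_def by (rule onorm_le) (rule matvec_bound)

lemma opnorm_nonneg: "0 \<le> opnorm (A::complex^'n^'n)"
  unfolding opnorm_def by (rule onorm_pos_le) simp

lemma opnorm_triangle: "opnorm ((A::complex^'n^'n) + B) \<le> opnorm A + opnorm B"
proof -
  have e: "(*v) (A+B) = (\<lambda>x. A *v x + B *v x)" by (rule ext) (simp add: matrix_vector_mult_add_rdistrib)
  show ?thesis unfolding opnorm_def e
    using onorm_triangle[of "(*v) A" "(*v) B"] by simp
qed

lemma Dch_le: "Dch U V \<le> opnorm (U - cscale (cis \<phi>) V)"
  unfolding Dch_def by (rule cINF_lower) (auto intro: bdd_belowI[where m=0] opnorm_nonneg)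

lemma Dch_lip: "Dch U V \<le> opnorm (U - U') + Dch U' V"
proof -
  have "Dch U V - opnorm (U - U') \<le> (INF \<phi>::real. opnorm (U' - cscale (cis \<phi>) V))"
  proof (rule cINF_greatest)
    fix \<phi> :: real
    have "opnorm (U - cscale (cis \<phi>) V) \<le> opnorm (U - U') + opnorm (U' - cscale (cis \<phi>) V)"
      using opnorm_triangle[of "U - U'" "U' - cscale (cis \<phi>) V"] by simp
    then show "Dch U V - opnorm (U - U') \<le> opnorm (U' - cscale (cis \<phi>) V)"
      using Dch_le[of U V \<phi>] by simp
  qed simp
  then show ?thesis unfolding Dch_def[of U' V] by simp
qed

lemma Dch_cont: "continuous_on UNIV (\<lambda>U::complex^'n^'n. Dch U V)"
proof (rule lipschitz_on_continuous_on)
  show "(real CARD('n) * real CARD('n))-lipschitz_on UNIV (\<lambda>U. Dch U V)"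
  proof (rule lipschitz_onI)
    fix U U' :: "complex^'n^'n"
    have "Dch U V - Dch U' V \<le> real CARD('n) * real CARD('n) * norm (U - U')"
      using Dch_lip[of U V U'] opnorm_bound[of "U - U'"] by simp
    moreover have "Dch U' V - Dch U V \<le> real CARD('n) * real CARD('n) * norm (U - U')"
      using Dch_lip[of U' V U] opnorm_bound[of "U' - U"] by (simp add: norm_minus_commute)
    ultimately show "dist (Dch U V) (Dch U' V) \<le> real CARD('n) * real CARD('n) * dist U U'"
      by (simp add: dist_real_def dist_norm abs_le_iff)
  qed simp
qed

lemma space_Ud_borel[simp]: "space Ud_borel = Ud"
  by (simp add: Ud_borel_def space_restrict_space)

lemma Dball_sets: "Dball V \<kappa> \<in> sets Ud_borel"
proof -
  have "closed {U. Dch U V \<le> \<kappa>}"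
    by (rule closed_Collect_le) (auto intro: Dch_cont continuous_on_const)
  then have "{U. Dch U V \<le> \<kappa>} \<in> sets borel" by simp
  moreover have "Dball V \<kappa> = Ud \<inter> {U. Dch U V \<le> \<kappa>}" by (auto simp: Dball_def)
  ultimately show ?thesis unfolding Ud_borel_def sets_restrict_space by blast
qed

lemma cont_mult: "continuous_on UNIV (\<lambda>x::(complex^'n^'n) \<times> (complex^'n^'n). cadj (fst x) ** snd x)"
  unfolding cadj_def matrix_matrix_mult_def
  apply (intro continuous_on_vec_lambda continuous_on_sum continuous_on_mult continuous_on_cnj continuous_on_component continuous_on_fst continuous_on_snd continuous_on_id)
  done




lemma cont_lmult: "continuous_on UNIV (\<lambda>W::complex^'n^'n. V ** W)"
  unfolding matrix_matrix_mult_def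
  apply (intro continuous_on_vec_lambda continuous_on_sum continuous_on_mult continuous_on_const continuous_on_component continuous_on_id)
  done

lemma meas_Ud: "continuous_on UNIV f \<Longrightarrow> (\<And>x. x \<in> Ud \<Longrightarrow> f x \<in> Ud) \<Longrightarrow> f \<in> measurable Ud_borel Ud_borel"
  unfolding Ud_borel_def
  apply (rule measurable_restrict_space2)
   apply (auto simp: space_restrict_space)[1]
  apply (rule measurable_restrict_space1)
  apply (erule borel_measurable_continuous_onI)
  done

lemma id_borel: "sets M = sets Ud_borel \<Longrightarrow> (\<lambda>x. x) \<in> borel_measurable M"
  apply (subst measurable_cong_sets[of M Ud_borel borel borel], assumption, rule refl)
  unfolding Ud_borel_def
  by (rule measurable_restrict_space1) (rule measurable_id)

lemma haar_integral:
  assumes "haar_Ud \<mu>" "V \<in> Ud" "(f::_\<Rightarrow>real) \<in> borel_measurable Ud_borel"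
  shows "integral\<^sup>L \<mu> f = (\<integral>W. f (V ** W) \<partial>\<mu>)"
proof -
  have s: "sets \<mu> = sets Ud_borel" and d: "distr \<mu> Ud_borel (\<lambda>U. V ** U) = \<mu>"
    using assms by (auto simp: haar_Ud_def)
  have m: "(\<lambda>U. V ** U) \<in> measurable \<mu> Ud_borel"
    unfolding measurable_cong_sets[OF s refl] by (rule meas_Ud[OF cont_lmult Ud_mult[OF assms(2)]])
  have "integral\<^sup>L \<mu> f = integral\<^sup>L (distr \<mu> Ud_borel (\<lambda>U. V ** U)) f" using d by simp
  also have "\<dots> = (\<integral>W. f (V ** W) \<partial>\<mu>)" by (rule integral_distr[OF m assms(3)])
  finally show ?thesis .
qed

lemma haar_nn_integral:
  assumes "haar_Ud \<mu>" "V \<in> Ud" "f \<in> borel_measurable Ud_borel"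
  shows "integral\<^sup>N \<mu> f = (\<integral>\<^sup>+W. f (V ** W) \<partial>\<mu>)"
proof -
  have s: "sets \<mu> = sets Ud_borel" and d: "distr \<mu> Ud_borel (\<lambda>U. V ** U) = \<mu>"
    using assms by (auto simp: haar_Ud_def)
  have m: "(\<lambda>U. V ** U) \<in> measurable \<mu> Ud_borel"
    unfolding measurable_cong_sets[OF s refl] by (rule meas_Ud[OF cont_lmult Ud_mult[OF assms(2)]])
  have f': "f \<in> borel_measurable (distr \<mu> Ud_borel (\<lambda>U. V ** U))"
    unfolding measurable_cong_sets[OF sets_distr refl] by (rule assms(3))
  have "integral\<^sup>N \<mu> f = integral\<^sup>N (distr \<mu> Ud_borel (\<lambda>U. V ** U)) f" using d by simp
  also have "\<dots> = (\<integral>\<^sup>+W. f (V ** W) \<partial>\<mu>)" by (rule nn_integral_distr[OF m f'])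
  finally show ?thesis .
qed

lemma supp_AE:
  assumes s: "sets M = sets Ud_borel"
  shows "AE x in M. x \<in> msupp M"
proof -
  have sp: "space M = Ud" using sets_eq_imp_space_eq[OF s] by simp
  define F where "F = {S. open S \<and> emeasure M (S \<inter> Ud) = 0}"
  obtain F' where F': "F' \<subseteq> F" "countable F'" "\<Union>F' = \<Union>F"
    using Lindelof[of F] by (auto simp: F_def)
  have "\<forall>S\<in>F'. AE x in M. x \<notin> S"
  proof
    fix S assume "S \<in> F'"
    then have S: "open S" "emeasure M (S \<inter> Ud) = 0" using F' by (auto simp: F_def)
    have "S \<inter> Ud \<in> sets M" unfolding s Ud_borel_def sets_restrict_space
      using S(1) by auto
    then have "S \<inter> Ud \<in> null_sets M" using S(2) by auto
    then show "AE x in M. x \<notin> S"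
      by (rule AE_I') (auto simp: sp)
  qed
  then have "AE x in M. \<forall>S\<in>F'. x \<notin> S"
    by (rule AE_ball_countable[OF F'(2), THEN iffD2])
  then show ?thesis
  proof (rule AE_mp[OF _ AE_I2[OF impI]])
    fix x assume x: "x \<in> space M" "\<forall>S\<in>F'. x \<notin> S"
    show "x \<in> msupp M" unfolding msupp_def
    proof (intro CollectI conjI allI impI x(1))
      fix S assume S: "open S \<and> x \<in> S"
      show "emeasure M (S \<inter> space M) > 0"
      proof (rule ccontr)
        assume "\<not> ?thesis"
        then have "S \<in> F" using S by (auto simp: F_def sp zero_less_iff_neq_zero)
        then have "x \<in> \<Union>F'" using F'(3) S by auto
        then show False using x(2) by auto
      qed
    qed
  qed
qed

lemma set_int_bound:
  assumes "integrable M (\<Phi>::_\<Rightarrow>real)" "A \<in> sets M"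
  shows "set_lebesgue_integral M A \<Phi> \<le> (\<integral>x. \<bar>\<Phi> x\<bar> \<partial>M)"
  unfolding set_lebesgue_integral_def
  by (rule integral_mono[OF integrable_mult_indicator[OF assms(2,1)] integrable_abs[OF assms(1)]])
     (simp add: indicator_def abs_ge_self)


theorem lemma2:
  fixes \<nu> \<mu> :: "(complex^'n^'n) measure" and \<epsilon> :: real
  assumes "haar_Ud \<mu>"
    and "prob_space \<nu>" and "sets \<nu> = sets Ud_borel"
    and "\<not> is_eps_net (msupp \<nu>) \<epsilon>"
  shows "\<exists>V0\<in>Ud. \<forall>\<Phi> \<kappa>. channel_fun \<Phi> \<and> integrable \<mu> \<Phi> \<and> 0 \<le> \<kappa> \<and> \<kappa> \<le> \<epsilon> \<longrightarrow>
           set_lebesgue_integral \<mu> (Dball V0 \<kappa>) (Tnu \<nu> \<Phi>)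
             \<le> (SUP V \<in> {V \<in> Ud. Dch V (mat 1) \<ge> \<epsilon>}. set_lebesgue_integral \<mu> (Dball V \<kappa>) \<Phi>)"
proof -
  note haar = assms(1)
  have smu: "sets \<mu> = sets Ud_borel" and pmu: "prob_space \<mu>" using haar by (auto simp: haar_Ud_def)
  have snu: "sets \<nu> = sets Ud_borel" by (rule assms(3))
  have pnu: "prob_space \<nu>" by (rule assms(2))
  have spmu: "space \<mu> = Ud" using sets_eq_imp_space_eq[OF smu] by simp
  have spnu: "space \<nu> = Ud" using sets_eq_imp_space_eq[OF snu] by simp
  have "msupp \<nu> \<subseteq> Ud" using spnu by (auto simp: msupp_def)
  then obtain U0 where U0: "U0 \<in> Ud" "\<And>V. V \<in> msupp \<nu> \<Longrightarrow> \<epsilon> < Dch U0 V"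
    using assms(4) unfolding is_eps_net_def by (auto simp: not_le)
  have psf: "pair_sigma_finite \<nu> \<mu>"
    unfolding pair_sigma_finite_def using pnu pmu by (simp add: prob_space_imp_sigma_finite)
  interpret P: pair_sigma_finite \<nu> \<mu> by (rule psf)
  interpret Pmu: prob_space \<mu> by (rule pmu)
  interpret Pnu: prob_space \<nu> by (rule pnu)
  show ?thesis
  proof (intro bexI[OF _ U0(1)] allI impI)
    fix \<Phi> :: "complex^'n^'n \<Rightarrow> real" and \<kappa> :: real
    assume H: "channel_fun \<Phi> \<and> integrable \<mu> \<Phi> \<and> 0 \<le> \<kappa> \<and> \<kappa> \<le> \<epsilon>"
    then have int\<Phi>: "integrable \<mu> \<Phi>" by simp
    define B where "B = Dball U0 \<kappa>"
    define S where "S = (SUP V \<in> {V \<in> Ud. Dch V (mat 1) \<ge> \<epsilon>}. set_lebesgue_integral \<mu> (Dball V \<kappa>) \<Phi>)"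
    have \<Phi>m: "\<Phi> \<in> borel_measurable Ud_borel"
      using borel_measurable_integrable[OF int\<Phi>] by (subst (asm) measurable_cong_sets[OF smu refl])
    have Bs: "B \<in> sets \<mu>" unfolding B_def smu by (rule Dball_sets)
    define F where "F = (\<lambda>p::(complex^'n^'n) \<times> (complex^'n^'n). indicator B (snd p) * \<Phi> (cadj (fst p) ** snd p))"
    have hm: "(\<lambda>p::(complex^'n^'n) \<times> (complex^'n^'n). cadj (fst p) ** snd p) \<in> measurable (\<nu> \<Otimes>\<^sub>M \<mu>) Ud_borel"
    proof -
      have f1: "(\<lambda>p. fst p) \<in> borel_measurable (\<nu> \<Otimes>\<^sub>M \<mu>)"
        by (rule measurable_compose[OF measurable_fst id_borel[OF snu]])
      have f2: "(\<lambda>p. snd p) \<in> borel_measurable (\<nu> \<Otimes>\<^sub>M \<mu>)"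
        by (rule measurable_compose[OF measurable_snd id_borel[OF smu]])
      have "(\<lambda>p::(complex^'n^'n) \<times> (complex^'n^'n). cadj (fst p) ** snd p) \<in> borel_measurable (\<nu> \<Otimes>\<^sub>M \<mu>)"
        using borel_measurable_continuous_Pair[OF f1 f2 cont_mult] by simp
      then show ?thesis unfolding Ud_borel_def
        by (rule measurable_restrict_space2[rotated])
           (auto simp: space_pair_measure spnu spmu Ud_mult Ud_cadj)
    qed
    have Fm: "F \<in> borel_measurable (\<nu> \<Otimes>\<^sub>M \<mu>)"
    proof -
      have a: "(\<lambda>p. indicator B (snd p) :: real) \<in> borel_measurable (\<nu> \<Otimes>\<^sub>M \<mu>)"
        by (rule measurable_compose[OF measurable_snd borel_measurable_indicator[OF Bs]])
      have b: "(\<lambda>p. \<Phi> (cadj (fst p) ** snd p)) \<in> borel_measurable (\<nu> \<Otimes>\<^sub>M \<mu>)"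
        by (rule measurable_compose[OF hm \<Phi>m])
      show ?thesis unfolding F_def using a b by (rule borel_measurable_times)
    qed
    have \<Phi>c: "\<And>V. V \<in> Ud \<Longrightarrow> (\<lambda>U. \<Phi> (V ** U)) \<in> borel_measurable Ud_borel"
      by (rule measurable_compose[OF meas_Ud[OF cont_lmult Ud_mult] \<Phi>m])
    have ennabs: "\<And>M f. (f::_\<Rightarrow>real) \<in> borel_measurable M \<Longrightarrow> (\<lambda>x. ennreal \<bar>f x\<bar>) \<in> borel_measurable M"
      by (rule measurable_compose[OF borel_measurable_abs measurable_ennreal])
    have Fint: "integrable (\<nu> \<Otimes>\<^sub>M \<mu>) F"
    proof (rule integrableI_bounded[OF Fm])
      have "(\<integral>\<^sup>+p. ennreal (norm (F p)) \<partial>(\<nu> \<Otimes>\<^sub>M \<mu>)) = (\<integral>\<^sup>+V. (\<integral>\<^sup>+U. ennreal (norm (F (V,U))) \<partial>\<mu>) \<partial>\<nu>)"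
        by (rule P.M2.nn_integral_fst[symmetric]) (simp add: ennabs[OF Fm])
      also have "\<dots> \<le> (\<integral>\<^sup>+V. (\<integral>\<^sup>+U. ennreal \<bar>\<Phi> U\<bar> \<partial>\<mu>) \<partial>\<nu>)"
      proof (rule nn_integral_mono)
        fix V assume "V \<in> space \<nu>"
        hence V: "V \<in> Ud" by (simp add: spnu)
        have "(\<integral>\<^sup>+U. ennreal (norm (F (V,U))) \<partial>\<mu>) \<le> (\<integral>\<^sup>+U. ennreal \<bar>\<Phi> (cadj V ** U)\<bar> \<partial>\<mu>)"
          by (rule nn_integral_mono) (auto simp: F_def indicator_def)
        also have "\<dots> = (\<integral>\<^sup>+W. ennreal \<bar>\<Phi> (cadj V ** (V ** W))\<bar> \<partial>\<mu>)"
          by (rule haar_nn_integral[OF haar V ennabs[OF \<Phi>c[OF Ud_cadj[OF V]]]])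
        also have "\<dots> = (\<integral>\<^sup>+W. ennreal \<bar>\<Phi> W\<bar> \<partial>\<mu>)"
          by (rule nn_integral_cong) (simp add: spmu cancel_left V)
        finally show "(\<integral>\<^sup>+U. ennreal (norm (F (V,U))) \<partial>\<mu>) \<le> (\<integral>\<^sup>+U. ennreal \<bar>\<Phi> U\<bar> \<partial>\<mu>)" .
      qed
      also have "\<dots> = (\<integral>\<^sup>+U. ennreal \<bar>\<Phi> U\<bar> \<partial>\<mu>)" by (simp add: Pnu.emeasure_space_1)
      also have "\<dots> < \<infinity>" using int\<Phi> by (simp add: integrable_iff_bounded)
      finally show "(\<integral>\<^sup>+p. ennreal (norm (F p)) \<partial>(\<nu> \<Otimes>\<^sub>M \<mu>)) < \<infinity>" .
    qed
    have "set_lebesgue_integral \<mu> B (Tnu \<nu> \<Phi>) = (\<integral>U. (\<integral>V. F (V,U) \<partial>\<nu>) \<partial>\<mu>)"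
      unfolding set_lebesgue_integral_def Tnu_def F_def by simp
    also have "\<dots> = (\<integral>V. (\<integral>U. F (V,U) \<partial>\<mu>) \<partial>\<nu>)"
      using P.Fubini_integral[of "\<lambda>V U. F (V,U)"] Fint by simp
    also have "\<dots> \<le> (\<integral>V. S \<partial>\<nu>)"
    proof (rule integral_mono_AE)
      show "integrable \<nu> (\<lambda>V. \<integral>U. F (V,U) \<partial>\<mu>)" by (rule P.integrable_fst'[OF Fint])
      show "integrable \<nu> (\<lambda>V. S)" by simp
      show "AE V in \<nu>. (\<integral>U. F (V,U) \<partial>\<mu>) \<le> S"
        using supp_AE[OF snu]
      proof (rule AE_mp[OF _ AE_I2[OF impI]])
        fix V assume Vs: "V \<in> msupp \<nu>"
        then have V: "V \<in> Ud" using spnu by (auto simp: msupp_def)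
        have DV: "\<epsilon> < Dch U0 V" by (rule U0(2)[OF Vs])
        have Fvm: "(\<lambda>U. F (V,U)) \<in> borel_measurable Ud_borel"
          unfolding F_def fst_conv snd_conv
          by (intro borel_measurable_times borel_measurable_indicator \<Phi>c Ud_cadj V)
             (simp add: B_def Dball_sets)
        have "(\<integral>U. F (V,U) \<partial>\<mu>) = (\<integral>W. F (V, V ** W) \<partial>\<mu>)"
          by (rule haar_integral[OF haar V Fvm])
        also have "\<dots> = set_lebesgue_integral \<mu> (Dball (cadj V ** U0) \<kappa>) \<Phi>"
          unfolding set_lebesgue_integral_def
        proof (rule Bochner_Integration.integral_cong[OF refl])
          fix W assume "W \<in> space \<mu>"
          hence W: "W \<in> Ud" by (simp add: spmu)
          have "Dch (V ** W) U0 = Dch W (cadj V ** U0)"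
            using Dch_unitary[OF Ud_cadj[OF V], of "V ** W" U0] unfolding cancel_left[OF V] by (rule sym)
          then have "(V ** W \<in> B) = (W \<in> Dball (cadj V ** U0) \<kappa>)"
            using W V by (simp add: B_def Dball_def Ud_mult)
          then show "F (V, V ** W) = indicator (Dball (cadj V ** U0) \<kappa>) W *\<^sub>R \<Phi> W"
            by (simp add: F_def indicator_def cancel_left[OF V])
        qed
        also have "\<dots> \<le> S" unfolding S_def
        proof (rule cSUP_upper)
          have "Dch (cadj V ** U0) (mat 1) = Dch U0 V"
            using Dch_unitary[OF V, of "cadj V ** U0" "mat 1"] unfolding cancel_left2[OF V] matrix_mul_rid by (rule sym)
          then show "cadj V ** U0 \<in> {V \<in> Ud. \<epsilon> \<le> Dch V (mat 1)}"
            using DV V U0(1) by (simp add: Ud_mult Ud_cadj)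
          show "bdd_above ((\<lambda>V. set_lebesgue_integral \<mu> (Dball V \<kappa>) \<Phi>) ` {V \<in> Ud. \<epsilon> \<le> Dch V (mat 1)})"
            by (rule bdd_aboveI2[where M="\<integral>x. \<bar>\<Phi> x\<bar> \<partial>\<mu>"])
               (rule set_int_bound[OF int\<Phi>], simp add: smu Dball_sets)
        qed
        finally show "(\<integral>U. F (V,U) \<partial>\<mu>) \<le> S" .
      qed
    qed
    also have "\<dots> = S" by (simp add: Pnu.prob_space)
    finally show "set_lebesgue_integral \<mu> (Dball U0 \<kappa>) (Tnu \<nu> \<Phi>)
             \<le> (SUP V \<in> {V \<in> Ud. Dch V (mat 1) \<ge> \<epsilon>}. set_lebesgue_integral \<mu> (Dball V \<kappa>) \<Phi>)"
      unfolding S_def B_def .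
  qed
qed

end
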